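(* Let $n\ge1$, let $\|\cdot\|$ be a norm on $\mathbb R^n$, and let $H=(h_1,\dots,h_n)$ be a continuous map from an open set of $\mathbb R^{4n+1}$ to $\mathbb R^n$, written $H(t;\zeta^0,\zeta^1;\xi^0,\xi^1)$ with $t\in\mathbb R$, $\zeta^0,\zeta^1,\xi^0,\xi^1\in\mathbb R^n$. Assume $P=(p_1,\dots,p_n)$ satisfies $P=H(0;\mathbf 0,\mathbf 0;P,P)$ and $|p_1|\le1$. Let $\mathcal P=(0;\mathbf0,\mathbf0;P,P)$ and, for $\varepsilon>0$, $$N_\varepsilon(\mathcal P)=\{(t;\zeta^0,\zeta^1;\xi^0,\xi^1):|t|+\|\zeta^0\|+\|\zeta^1\|+\|\xi^0-P\|+\|\xi^1-P\|\le\varepsilon\},$$ and suppose $N_\varepsilon(\mathcal P)$ lies in the domain of $H$ and: (i) there is $\Lambda>0$ with $\|H(\bar t;\zeta^0,\zeta^1;\xi^0,\xi^1)-H(t;\zeta^0,\zeta^1;\xi^0,\xi^1)\|\le\Lambda|\bar t-t|$ whenever both points are in $N_\varepsilon(\mathcal P)$; (ii) there are $L_0,L_1>0$ with $\|H(t;\bar\zeta^0,\bar\zeta^1;\xi^0,\xi^1)-H(t;\zeta^0,\zeta^1;\xi^0,\xi^1)\|\le L_0\|\bar\zeta^0-\zeta^0\|+L_1\|\bar\zeta^1-\zeta^1\|$ whenever both points are in $N_\varepsilon(\mathcal P)$; (iii) there are $C_0,C_1\ge0$ with $C_0+C_1<1$ and $\|H(t;\zeta^0,\zeta^1;\bar\xi^0,\bar\xi^1)-H(t;\zeta^0,\zeta^1;\xi^0,\xi^1)\|\le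 C_0\|\bar\xi^0-\xi^0\|+C_1\|\bar\xi^1-\xi^1\|$ whenever both points are in $N_\varepsilon(\mathcal P)$; (iv) $|h_1(X)|\le1$ for all $X\in N_\varepsilon(\mathcal P)$. Then there exist $\delta>0$ and $Z=(z_1,\dots,z_n)\in C^1([-\delta,\delta];\mathbb R^n)$ with $|z_1(t)|\le|t|$ and $(t;Z(t),Z(z_1(t));Z'(t),Z'(z_1(t)))\in N_\varepsilon(\mathcal P)$ for $|t|\le\delta$, such that $$Z'(t)=H\big(t;Z(t),Z(z_1(t));Z'(t),Z'(z_1(t))\big)\ \ (|t|\le\delta),\qquad Z(0)=0,\qquad Z'(0)=P.$$
   Context: Here $Z(z_1(t))$ denotes $(z_1(z_1(t)),\dots,z_n(z_1(t)))$ and similarly for $Z'(z_1(t))$. *)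

theory Defs
  imports "HOL-Analysis.Analysis"
begin

definition is_norm :: "(real^'n \<Rightarrow> real) \<Rightarrow> bool" where
  "is_norm nrm \<longleftrightarrow>
     (\<forall>x. 0 \<le> nrm x) \<and> (\<forall>x. nrm x = 0 \<longleftrightarrow> x = 0) \<and>
     (\<forall>c x. nrm (c *\<^sub>R x) = \<bar>c\<bar> * nrm x) \<and>
     (\<forall>x y. nrm (x + y) \<le> nrm x + nrm y)"

definition Neps ::
  "(real^'n \<Rightarrow> real) \<Rightarrow> real^'n \<Rightarrow> real \<Rightarrow>
   (real \<times> (real^'n) \<times> (real^'n) \<times> (real^'n) \<times> (real^'n)) set" where
  "Neps nrm P \<epsilon> = {(t, z0, z1, x0, x1).
      \<bar>t\<bar> + nrm z0 + nrm z1 + nrm (x0 - P) + nrm (x1 - P) \<le> \<epsilon>}"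

end

theory Submission imports Defs begin

lemma nrm_basic:
  assumes "is_norm nrm"
  shows "nrm (-x) = nrm x" "nrm (x - y) = nrm (y - x)" "nrm 0 = 0" "nrm x \<ge> 0"
    "nrm (x + y) \<le> nrm x + nrm y" "nrm (c *\<^sub>R x) = \<bar>c\<bar> * nrm x"
    "nrm (x - z) \<le> nrm (x - y) + nrm (y - z)"
proof -
  have s: "\<And>c x. nrm (c *\<^sub>R x) = \<bar>c\<bar> * nrm x" using assms by (auto simp: is_norm_def)
  have t: "\<And>x y. nrm (x + y) \<le> nrm x + nrm y" using assms by (auto simp: is_norm_def)
  show "nrm (-x) = nrm x" using s[of "-1" x] by simp
  show "nrm (x - y) = nrm (y - x)" using s[of "-1" "x - y"] by simp
  show "nrm 0 = 0" using assms by (auto simp: is_norm_def)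
  show "nrm x \<ge> 0" using assms by (auto simp: is_norm_def)
  show "nrm (x + y) \<le> nrm x + nrm y" by (rule t)
  show "nrm (c *\<^sub>R x) = \<bar>c\<bar> * nrm x" by (rule s)
  show "nrm (x - z) \<le> nrm (x - y) + nrm (y - z)" using t[of "x - y" "y - z"] by simp
qed

lemma nrm_sum:
  assumes "is_norm nrm"
  shows "nrm (sum f S) \<le> (\<Sum>i\<in>S. nrm (f i))"
proof (induction S rule: infinite_finite_induct)
  case (infinite S) then show ?case using nrm_basic[OF assms] by simp
next
  case empty then show ?case using nrm_basic[OF assms] by simp
next
  case (insert x F)
  then show ?case using nrm_basic(5)[OF assms, of "f x" "sum f F"] by simp
qed

lemma nrm_upper:
  assumes "is_norm nrm"
  obtains A where "A > 0" "\<And>x. nrm x \<le> A * norm x"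
proof -
  define A where "A = 1 + (\<Sum>i\<in>UNIV. nrm (axis i (1::real)))"
  have A0: "A > 0" unfolding A_def using nrm_basic(4)[OF assms] by (simp add: sum_nonneg add_pos_nonneg)
  have "nrm x \<le> A * norm x" for x :: "real^'a"
  proof -
    have "x = (\<Sum>i\<in>UNIV. (x $ i) *\<^sub>R axis i 1)"
      using basis_expansion[of x] by (simp add: scalar_mult_eq_scaleR)
    then have "nrm x \<le> (\<Sum>i\<in>UNIV. nrm ((x $ i) *\<^sub>R axis i (1::real)))"
      using nrm_sum[OF assms] by metis
    also have "\<dots> = (\<Sum>i\<in>UNIV. \<bar>x $ i\<bar> * nrm (axis i (1::real)))"
      using nrm_basic(6)[OF assms] by simp
    also have "\<dots> \<le> (\<Sum>i\<in>UNIV. norm x * nrm (axis i (1::real)))"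
      by (intro sum_mono mult_right_mono component_le_norm_cart nrm_basic(4)[OF assms])
    also have "\<dots> \<le> A * norm x" unfolding A_def
      by (simp add: sum_distrib_left[symmetric] algebra_simps)
    finally show ?thesis .
  qed
  with A0 that show ?thesis by blast
qed

lemma nrm_tendsto:
  assumes "is_norm nrm" "(X \<longlongrightarrow> x) F"
  shows "((\<lambda>k. nrm (X k)) \<longlongrightarrow> nrm x) F"
proof -
  obtain A where A: "A > 0" "\<And>x. nrm x \<le> A * norm x" using nrm_upper[OF assms(1)] by blast
  have "((\<lambda>k. X k - x) \<longlongrightarrow> 0) F" using assms(2) by (rule LIM_zero)
  then have "((\<lambda>k. A * norm (X k - x)) \<longlongrightarrow> A * 0) F"
    by (intro tendsto_intros) (simp add: tendsto_norm_zero)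
  moreover have "norm (nrm (X k) - nrm x) \<le> A * norm (X k - x)" for k
  proof -
    have "nrm (X k) \<le> nrm (X k - x) + nrm x" using nrm_basic(5)[OF assms(1), of "X k - x" x] by simp
    moreover have "nrm x \<le> nrm (X k - x) + nrm (X k)" using nrm_basic(5)[OF assms(1), of "x - X k" "X k"] nrm_basic(2)[OF assms(1), of x "X k"] by simp
    ultimately have "\<bar>nrm (X k) - nrm x\<bar> \<le> nrm (X k - x)" by linarith
    then show ?thesis using A(2)[of "X k - x"] by simp
  qed
  ultimately have "((\<lambda>k. nrm (X k) - nrm x) \<longlongrightarrow> 0) F"
    using Lim_null_comparison[where g="\<lambda>k. A * norm (X k - x)" and f="\<lambda>k. nrm (X k) - nrm x" and net=F]
    by (simp add: always_eventually)
  then show ?thesis by (rule LIM_zero_cancel)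
qed

lemma nrm_cont: assumes "is_norm nrm" shows "continuous_on S nrm"
proof (unfold continuous_on_def, intro ballI)
  fix x show "(nrm \<longlongrightarrow> nrm x) (at x within S)" using nrm_tendsto[OF assms tendsto_ident_at[of x S]] by simp
qed

lemma nrm_lower:
  assumes "is_norm nrm"
  obtains B where "B > 0" "\<And>x. norm x \<le> B * nrm x"
proof -
  let ?S = "sphere (0::real^'a) 1"
  obtain i :: 'a where True by auto
  have "axis i (1::real) \<in> ?S" by simp
  then have ne: "?S \<noteq> {}" by blast
  obtain x0 where x0: "x0 \<in> ?S" "\<And>y. y \<in> ?S \<Longrightarrow> nrm x0 \<le> nrm y"
    using continuous_attains_inf[OF compact_sphere ne nrm_cont[OF assms]] by blast
  have "x0 \<noteq> 0" using x0(1) by auto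
  moreover have "nrm x0 \<noteq> 0" if "x0 \<noteq> 0" using assms that unfolding is_norm_def by blast
  ultimately have m: "nrm x0 > 0" using nrm_basic(4)[OF assms, of x0] by linarith
  have "norm x \<le> (1 / nrm x0) * nrm x" for x
  proof (cases "x = 0")
    case True then show ?thesis using nrm_basic(3)[OF assms] by simp
  next
    case False
    then have "(1 / norm x) *\<^sub>R x \<in> ?S" by simp
    then have "nrm x0 \<le> nrm ((1 / norm x) *\<^sub>R x)" by (rule x0(2))
    also have "\<dots> = nrm x / norm x" using nrm_basic(6)[OF assms] by simp
    finally have "nrm x0 * norm x \<le> nrm x" using False by (simp add: field_simps)
    then show ?thesis using m by (simp add: field_simps)
  qed
  moreover have "1 / nrm x0 > 0" using m by simp
  ultimately show ?thesis using that by blast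
qed


lemma mvt_bound:
  fixes f :: "real \<Rightarrow> 'b::real_normed_vector"
  assumes "\<And>x. x \<in> {a..b} \<Longrightarrow> (f has_vector_derivative f' x) (at x within {a..b})"
    "\<And>x. x \<in> {a..b} \<Longrightarrow> norm (f' x) \<le> B" "x \<in> {a..b}" "y \<in> {a..b}"
  shows "norm (f x - f y) \<le> B * \<bar>x - y\<bar>"
proof -
  have "norm (f x - f y) \<le> B * norm (x - y)"
  proof (rule differentiable_bound[of "{a..b}" f "\<lambda>x h. h *\<^sub>R f' x" B x y])
    show "convex {a..b}" by simp
    show "\<And>x. x \<in> {a..b} \<Longrightarrow> (f has_derivative (\<lambda>h. h *\<^sub>R f' x)) (at x within {a..b})"
      using assms(1) by (simp add: has_vector_derivative_def)
    fix z assume "z \<in> {a..b}"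
    then show "onorm (\<lambda>h. h *\<^sub>R f' z) \<le> B"
      using assms(2) onorm_scaleR_left[OF bounded_linear_ident, of "f' z"] onorm_id[where 'a=real] by simp
  qed (use assms in auto)
  then show ?thesis by simp
qed

lemma abstract_fix:
  fixes T :: "(real \<Rightarrow> real^'n) \<Rightarrow> real \<Rightarrow> real^'n" and S :: "(real \<Rightarrow> real^'n) \<Rightarrow> bool"
  assumes nrm: "is_norm nrm"
  and S0: "S W0"
  and inv: "\<And>W. S W \<Longrightarrow> S (T W)"
  and contr: "\<And>W V d. S W \<Longrightarrow> S V \<Longrightarrow> (\<forall>t\<in>I. nrm (W t - V t) \<le> d) \<Longrightarrow> \<forall>t\<in>I. nrm (T W t - T V t) \<le> q * d"
  and q: "0 \<le> q" "q < 1"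
  and D0: "\<And>W V t. S W \<Longrightarrow> S V \<Longrightarrow> t \<in> I \<Longrightarrow> nrm (W t - V t) \<le> D"
  and closed: "\<And>f g. (\<And>k. S (f k)) \<Longrightarrow> (\<And>t. t \<in> I \<Longrightarrow> (\<lambda>k. f k t) \<longlonglongrightarrow> g t) \<Longrightarrow> S g"
  shows "\<exists>W. S W \<and> (\<forall>t\<in>I. T W t = W t)"
proof -
  define E where "E = max D 0"
  have E0: "E \<ge> 0" unfolding E_def by simp
  have DE: "\<And>W V t. S W \<Longrightarrow> S V \<Longrightarrow> t \<in> I \<Longrightarrow> nrm (W t - V t) \<le> E"
    using D0 unfolding E_def by (meson max.cobounded1 order_trans)
  define f where "f k = (T ^^ k) W0" for k
  have Sf: "S (f k)" for k by (induction k) (auto simp: f_def S0 inv)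
  have fS: "f (Suc k) = T (f k)" for k by (simp add: f_def)
  have stepb: "\<forall>t\<in>I. nrm (f (Suc k) t - f k t) \<le> q^k * E" for k
  proof (induction k)
    case 0 then show ?case using DE Sf by simp
  next
    case (Suc k)
    then have "\<forall>t\<in>I. nrm (T (f (Suc k)) t - T (f k) t) \<le> q * (q^k * E)"
      by (intro contr Sf)
    then show ?case by (simp add: fS[symmetric] mult.assoc)
  qed
  have q1: "1 - q > 0" using q by simp
  have tail0: "nrm (f m t - f k t) \<le> E * (q^k - q^m) / (1 - q)" if "t \<in> I" "k \<le> m" for t k m
    using that(2)
  proof (induction m rule: dec_induct)
    case base then show ?case using nrm_basic(3)[OF nrm] by simp
  next
    case (step m)
    have "nrm (f (Suc m) t - f k t) \<le> nrm (f (Suc m) t - f m t) + nrm (f m t - f k t)"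
      by (rule nrm_basic(7)[OF nrm])
    also have "\<dots> \<le> q^m * E + E * (q^k - q^m) / (1 - q)"
      using step.IH stepb[of m] that(1) by (simp add: mult.commute add_mono)
    also have "\<dots> = E * (q^k - q^Suc m) / (1 - q)"
      using q1 by (simp add: field_simps)
    finally show ?case .
  qed
  have tail: "nrm (f m t - f k t) \<le> E * q^k / (1 - q)" if "t \<in> I" "k \<le> m" for t k m
  proof -
    have "E * (q^k - q^m) \<le> E * q^k" using E0 q by (simp add: mult_left_mono)
    then have "E * (q^k - q^m) / (1 - q) \<le> E * q^k / (1 - q)" using q1 by (simp add: divide_right_mono)
    then show ?thesis using tail0[OF that] by linarith
  qed
  obtain Bn where Bn: "Bn > 0" "\<And>x. norm x \<le> Bn * nrm x" using nrm_lower[OF nrm] by blast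
  have lim0: "(\<lambda>n. Bn * E / (1 - q) * q^n) \<longlonglongrightarrow> 0"
    using q by (intro tendsto_mult_right_zero LIMSEQ_power_zero) simp
  have conv: "convergent (\<lambda>k. f k t)" if t: "t \<in> I" for t
  proof -
    have "Cauchy (\<lambda>k. f k t)"
    proof (rule metric_CauchyI)
      fix e :: real assume "e > 0"
      then obtain M where M: "\<forall>n\<ge>M. norm (Bn * E / (1 - q) * q^n - 0) < e"
        using lim0 unfolding LIMSEQ_iff by blast
      have "dist (f m t) (f n t) < e" if "m \<ge> M" "n \<ge> M" for m n
      proof -
        have *: "dist (f m t) (f n t) \<le> Bn * E / (1 - q) * q^M" if "m \<ge> M" "n \<ge> M" "n \<le> m" for m n
        proof -
          have "dist (f m t) (f n t) = norm (f m t - f n t)" by (simp add: dist_norm)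
          also have "\<dots> \<le> Bn * nrm (f m t - f n t)" by (rule Bn(2))
          also have "\<dots> \<le> Bn * (E * q^n / (1 - q))" using tail[OF t that(3)] Bn(1) by (intro mult_left_mono) auto
          also have "\<dots> \<le> Bn * (E * q^M / (1 - q))"
            using Bn(1) E0 q1 q power_decreasing[OF that(2), of q]
            by (intro mult_left_mono divide_right_mono mult_left_mono) auto
          finally show ?thesis by simp
        qed
        have "dist (f m t) (f n t) \<le> Bn * E / (1 - q) * q^M"
          using *[of m n] *[of n m] that by (cases "n \<le> m") (auto simp: dist_commute)
        moreover have "Bn * E / (1 - q) * q^M < e"
        proof -
          have "norm (Bn * E / (1 - q) * q^M - 0) < e" using M by blast
          moreover have "Bn * E / (1 - q) * q^M \<ge> 0" using Bn(1) E0 q1 q by simp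
          ultimately show ?thesis by (metis abs_of_nonneg real_norm_def diff_zero)
        qed
        ultimately show ?thesis by linarith
      qed
      then show "\<exists>M. \<forall>m\<ge>M. \<forall>n\<ge>M. dist (f m t) (f n t) < e" by blast
    qed
    then show ?thesis by (simp add: Cauchy_convergent_iff)
  qed
  define g where "g t = lim (\<lambda>k. f k t)" for t
  have fg: "(\<lambda>k. f k t) \<longlonglongrightarrow> g t" if "t \<in> I" for t
    using conv[OF that] unfolding g_def by (simp add: convergent_LIMSEQ_iff)
  have Sg: "S g" by (rule closed[OF Sf fg])
  have gb: "nrm (g t - f k t) \<le> E * q^k / (1 - q)" if t: "t \<in> I" for t k
  proof (rule LIMSEQ_le_const2)
    show "(\<lambda>m. nrm (f m t - f k t)) \<longlonglongrightarrow> nrm (g t - f k t)"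
      by (intro nrm_tendsto[OF nrm] tendsto_diff fg[OF t] tendsto_const)
    show "\<exists>N. \<forall>n\<ge>N. nrm (f n t - f k t) \<le> E * q ^ k / (1 - q)"
      using tail[OF t] by blast
  qed
  have fix0: "nrm (T g t - g t) \<le> 0" if t: "t \<in> I" for t
  proof (rule LIMSEQ_le_const)
    show "(\<lambda>k. 2 * E / (1 - q) * q^Suc k) \<longlonglongrightarrow> 0"
      using q by (intro tendsto_mult_right_zero LIMSEQ_power_zero LIMSEQ_Suc) simp
    have "nrm (T g t - g t) \<le> 2 * E / (1 - q) * q^Suc k" for k
    proof -
      have "\<forall>t\<in>I. nrm (T g t - T (f k) t) \<le> q * (E * q^k / (1 - q))"
        using gb by (intro contr Sg Sf) auto
      then have a: "nrm (T g t - f (Suc k) t) \<le> q * (E * q^k / (1 - q))" using t fS by auto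
      have b: "nrm (f (Suc k) t - g t) \<le> E * q^Suc k / (1 - q)"
        using gb[OF t, of "Suc k"] nrm_basic(2)[OF nrm] by metis
      have "nrm (T g t - g t) \<le> nrm (T g t - f (Suc k) t) + nrm (f (Suc k) t - g t)"
        by (rule nrm_basic(7)[OF nrm])
      also have "\<dots> \<le> q * (E * q^k / (1 - q)) + E * q^Suc k / (1 - q)" using a b by linarith
      also have "\<dots> = 2 * E / (1 - q) * q^Suc k" by (simp add: field_simps)
      finally show ?thesis .
    qed
    then show "\<exists>N. \<forall>n\<ge>N. nrm (T g t - g t) \<le> 2 * E / (1 - q) * q^Suc n" by blast
  qed
  have "T g t = g t" if "t \<in> I" for t
    using fix0[OF that] nrm_basic(4)[OF nrm, of "T g t - g t"] nrm unfolding is_norm_def by auto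
  with Sg show ?thesis by blast
qed
theorem theorem4p1:
  fixes nrm :: "real^'n \<Rightarrow> real"
    and U :: "(real \<times> (real^'n) \<times> (real^'n) \<times> (real^'n) \<times> (real^'n)) set"
    and H :: "real \<times> (real^'n) \<times> (real^'n) \<times> (real^'n) \<times> (real^'n) \<Rightarrow> real^'n"
    and P :: "real^'n"
    and i1 :: 'n
    and \<epsilon> \<Lambda> L0 L1 C0 C1 :: real
  assumes nrm: "is_norm nrm"
    and U_open: "open U"
    and H_cont: "continuous_on U H"
    and P_fix: "P = H (0, 0, 0, P, P)"
    and P1: "\<bar>P $ i1\<bar> \<le> 1"
    and eps: "\<epsilon> > 0"
    and N_sub: "Neps nrm P \<epsilon> \<subseteq> U"
    and Lam: "\<Lambda> > 0"
    and lip_t: "\<And>t t' z0 z1 x0 x1.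
        (t, z0, z1, x0, x1) \<in> Neps nrm P \<epsilon> \<Longrightarrow> (t', z0, z1, x0, x1) \<in> Neps nrm P \<epsilon> \<Longrightarrow>
        nrm (H (t', z0, z1, x0, x1) - H (t, z0, z1, x0, x1)) \<le> \<Lambda> * \<bar>t' - t\<bar>"
    and L: "L0 > 0" "L1 > 0"
    and lip_z: "\<And>t z0 z1 z0' z1' x0 x1.
        (t, z0, z1, x0, x1) \<in> Neps nrm P \<epsilon> \<Longrightarrow> (t, z0', z1', x0, x1) \<in> Neps nrm P \<epsilon> \<Longrightarrow>
        nrm (H (t, z0', z1', x0, x1) - H (t, z0, z1, x0, x1))
          \<le> L0 * nrm (z0' - z0) + L1 * nrm (z1' - z1)"
    and C: "C0 \<ge> 0" "C1 \<ge> 0" "C0 + C1 < 1"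
    and lip_x: "\<And>t z0 z1 x0 x1 x0' x1'.
        (t, z0, z1, x0, x1) \<in> Neps nrm P \<epsilon> \<Longrightarrow> (t, z0, z1, x0', x1') \<in> Neps nrm P \<epsilon> \<Longrightarrow>
        nrm (H (t, z0, z1, x0', x1') - H (t, z0, z1, x0, x1))
          \<le> C0 * nrm (x0' - x0) + C1 * nrm (x1' - x1)"
    and h1_bound: "\<And>X. X \<in> Neps nrm P \<epsilon> \<Longrightarrow> \<bar>H X $ i1\<bar> \<le> 1"
  shows "\<exists>\<delta> > 0. \<exists>Z Z' :: real \<Rightarrow> real^'n.
           (\<forall>t \<in> {-\<delta>..\<delta>}. (Z has_vector_derivative Z' t) (at t within {-\<delta>..\<delta>})) \<and>
           continuous_on {-\<delta>..\<delta>} Z' \<and>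
           (\<forall>t \<in> {-\<delta>..\<delta>}.
              \<bar>Z t $ i1\<bar> \<le> \<bar>t\<bar> \<and>
              (t, Z t, Z (Z t $ i1), Z' t, Z' (Z t $ i1)) \<in> Neps nrm P \<epsilon> \<and>
              Z' t = H (t, Z t, Z (Z t $ i1), Z' t, Z' (Z t $ i1))) \<and>
           Z 0 = 0 \<and> Z' 0 = P"
proof -
  obtain A where A: "A > 0" "\<And>x. nrm x \<le> A * norm x" using nrm_upper[OF nrm] by blast
  obtain Bn where Bn: "Bn > 0" "\<And>x. norm x \<le> Bn * nrm x" using nrm_lower[OF nrm] by blast
  note nb = nrm_basic[OF nrm]
  define q0 where "q0 = C0 + C1"
  have q0: "0 \<le> q0" "q0 < 1" using C unfolding q0_def by auto
  define M where "M = nrm P + 1"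
  have M: "M > 0" unfolding M_def using nb(4)[of P] by simp
  define G where "G = A * Bn * M"
  have G: "G > 0" unfolding G_def using A Bn M by simp
  define K where "K = (\<Lambda> + (L0 + L1) * G) / (1 - q0)"
  have K: "K > 0" unfolding K_def using Lam L G q0 by (simp add: add_pos_pos)
  have Keq: "K * (1 - q0) = \<Lambda> + (L0 + L1) * G" unfolding K_def using q0 by simp
  define E where "E = L0 * A * Bn + L1 * (A * Bn + G * Bn) + C1 * K * Bn"
  have E: "E \<ge> 0" unfolding E_def using L A Bn G C K by simp
  define \<delta> where "\<delta> = min (min (1 / K) (\<epsilon> / (1 + 2 * G + 2 * K))) ((1 - q0) / (2 * (E + 1)))"
  have \<delta>0: "\<delta> > 0" unfolding \<delta>_def using K eps G E q0 by simp
  have \<delta>K: "K * \<delta> \<le> 1"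
  proof -
    have "\<delta> \<le> 1 / K" unfolding \<delta>_def by simp
    then show ?thesis using K by (simp add: field_simps)
  qed
  have \<delta>eps: "\<delta> * (1 + 2 * G + 2 * K) \<le> \<epsilon>"
  proof -
    have "\<delta> \<le> \<epsilon> / (1 + 2 * G + 2 * K)" unfolding \<delta>_def by simp
    then show ?thesis using G K by (simp add: field_simps)
  qed
  have \<delta>E: "\<delta> * E \<le> (1 - q0) / 2"
  proof -
    have "\<delta> \<le> (1 - q0) / (2 * (E + 1))" unfolding \<delta>_def by simp
    then have "\<delta> * (E + 1) \<le> (1 - q0) / 2" using E by (simp add: field_simps)
    then show ?thesis using \<delta>0 by (simp add: algebra_simps)
  qed
  define I where "I = {-\<delta>..\<delta>}"
  have I0: "0 \<in> I" unfolding I_def using \<delta>0 by simp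
  have Ib: "t \<in> I \<longleftrightarrow> \<bar>t\<bar> \<le> \<delta>" for t unfolding I_def by auto
  define Zof :: "(real \<Rightarrow> real^'n) \<Rightarrow> real \<Rightarrow> real^'n"
    where "Zof W t = integral {-\<delta>..t} W - integral {-\<delta>..0} W" for W t
  define S :: "(real \<Rightarrow> real^'n) \<Rightarrow> bool"
    where "S W \<longleftrightarrow> W 0 = P \<and> (\<forall>s\<in>I. \<forall>t\<in>I. nrm (W s - W t) \<le> K * \<bar>s - t\<bar>)
       \<and> (\<forall>t\<in>I. \<bar>W t $ i1\<bar> \<le> 1)" for W
  define T :: "(real \<Rightarrow> real^'n) \<Rightarrow> real \<Rightarrow> real^'n"
    where "T W t = H (t, Zof W t, Zof W (Zof W t $ i1), W t, W (Zof W t $ i1))" for W t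
  have box: "(s, a, b, c, d) \<in> Neps nrm P \<epsilon>"
    if "\<bar>s\<bar> \<le> \<delta>" "nrm a \<le> G * \<delta>" "nrm b \<le> G * \<delta>" "nrm (c - P) \<le> K * \<delta>" "nrm (d - P) \<le> K * \<delta>"
    for s a b c d
  proof -
    have "\<bar>s\<bar> + nrm a + nrm b + nrm (c - P) + nrm (d - P) \<le> \<delta> * (1 + 2 * G + 2 * K)"
      using that by (simp add: algebra_simps)
    then show ?thesis using \<delta>eps unfolding Neps_def by simp
  qed
  have Sbnd: "nrm (W t - P) \<le> K * \<delta>" "nrm (W t) \<le> M" "norm (W t) \<le> Bn * M"
    if "S W" "t \<in> I" for W t
  proof -
    have "nrm (W t - W 0) \<le> K * \<bar>t - 0\<bar>" using that I0 unfolding S_def by blast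
    then have "nrm (W t - P) \<le> K * \<bar>t\<bar>" using that(1) unfolding S_def by simp
    also have "\<dots> \<le> K * \<delta>" using that(2) K Ib by (simp add: mult_left_mono)
    finally show 1: "nrm (W t - P) \<le> K * \<delta>" .
    have "nrm (W t) \<le> nrm (W t - P) + nrm P" using nb(5)[of "W t - P" P] by simp
    then show 2: "nrm (W t) \<le> M" using 1 \<delta>K unfolding M_def by linarith
    show "norm (W t) \<le> Bn * M" using Bn(2)[of "W t"] 2 Bn(1) by (meson mult_left_mono less_imp_le order_trans)
  qed
  have Scont: "continuous_on I W" if "S W" for W
  proof (rule lipschitz_on_continuous_on)
    show "(Bn * K)-lipschitz_on I W"
    proof (rule lipschitz_onI)
      fix x y assume "x \<in> I" "y \<in> I"
      then have "nrm (W x - W y) \<le> K * \<bar>x - y\<bar>" using that unfolding S_def by blast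
      then have "norm (W x - W y) \<le> Bn * (K * \<bar>x - y\<bar>)"
        using Bn by (meson mult_left_mono less_imp_le order_trans)
      then show "dist (W x) (W y) \<le> Bn * K * dist x y" by (simp add: dist_norm dist_real_def mult.assoc)
    qed (use Bn K in simp)
  qed
  have Zder: "(Zof W has_vector_derivative W t) (at t within I)" if "S W" "t \<in> I" for W t
  proof -
    have "((\<lambda>u. integral {-\<delta>..u} W) has_vector_derivative W t) (at t within {-\<delta>..\<delta>})"
      using integral_has_vector_derivative[of "-\<delta>" \<delta> W t] Scont[OF that(1)] that(2) unfolding I_def by simp
    then have "((\<lambda>u. integral {-\<delta>..u} W - integral {-\<delta>..0} W) has_vector_derivative W t - 0) (at t within {-\<delta>..\<delta>})"
      by (intro has_vector_derivative_diff has_vector_derivative_const)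
    then show ?thesis unfolding Zof_def I_def by simp
  qed
  have Z0: "Zof W 0 = 0" for W unfolding Zof_def by simp
  have Zlip: "nrm (Zof W t - Zof W s) \<le> G * \<bar>t - s\<bar>" if "S W" "t \<in> I" "s \<in> I" for W t s
  proof -
    have "norm (Zof W t - Zof W s) \<le> (Bn * M) * \<bar>t - s\<bar>"
      using mvt_bound[of "-\<delta>" \<delta> "Zof W" W "Bn * M" t s] Zder[OF that(1)] Sbnd(3)[OF that(1)] that(2,3)
      unfolding I_def by blast
    then have "A * norm (Zof W t - Zof W s) \<le> A * ((Bn * M) * \<bar>t - s\<bar>)" using A by simp
    then show ?thesis using A(2)[of "Zof W t - Zof W s"] unfolding G_def by (simp add: mult.assoc)
  qed
  have Zc: "\<bar>Zof W t $ i1 - Zof W s $ i1\<bar> \<le> \<bar>t - s\<bar>" if "S W" "t \<in> I" "s \<in> I" for W t s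
  proof -
    have d: "((\<lambda>u. Zof W u $ i1) has_vector_derivative W u $ i1) (at u within {-\<delta>..\<delta>})" if "u \<in> {-\<delta>..\<delta>}" for u
      using bounded_linear.has_vector_derivative[OF bounded_linear_vec_nth Zder[OF \<open>S W\<close>, of u]] that
      unfolding I_def by simp
    have "norm (Zof W t $ i1 - Zof W s $ i1) \<le> 1 * \<bar>t - s\<bar>"
      by (rule mvt_bound[of "-\<delta>" \<delta> _ "\<lambda>u. W u $ i1"]) (use d that in \<open>auto simp: S_def I_def\<close>)
    then show ?thesis by simp
  qed
  have Zc0: "\<bar>Zof W t $ i1\<bar> \<le> \<bar>t\<bar>" "Zof W t $ i1 \<in> I" if "S W" "t \<in> I" for W t
  proof -
    show "\<bar>Zof W t $ i1\<bar> \<le> \<bar>t\<bar>" using Zc[OF that I0] Z0 by simp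
    then show "Zof W t $ i1 \<in> I" using that(2) Ib by auto
  qed
  have Znrm: "nrm (Zof W t) \<le> G * \<delta>" if "S W" "t \<in> I" for W t
  proof -
    have "nrm (Zof W t) \<le> G * \<bar>t\<bar>" using Zlip[OF that I0] Z0 by simp
    also have "\<dots> \<le> G * \<delta>" using G that(2) Ib by (simp add: mult_left_mono)
    finally show ?thesis .
  qed
  have Zdiff: "norm (Zof W t - Zof V t) \<le> Bn * d * \<delta>"
    if "S W" "S V" "\<forall>t\<in>I. nrm (W t - V t) \<le> d" "t \<in> I" for W V d t
  proof -
    have der: "((\<lambda>u. Zof W u - Zof V u) has_vector_derivative W u - V u) (at u within {-\<delta>..\<delta>})"
      if "u \<in> {-\<delta>..\<delta>}" for u
      using Zder[OF \<open>S W\<close>, of u] Zder[OF \<open>S V\<close>, of u] that unfolding I_def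
      by (intro has_vector_derivative_diff) auto
    have bd: "norm (W u - V u) \<le> Bn * d" if "u \<in> {-\<delta>..\<delta>}" for u
      using Bn(2)[of "W u - V u"] \<open>\<forall>t\<in>I. nrm (W t - V t) \<le> d\<close> that Bn(1) unfolding I_def
      by (meson mult_left_mono less_imp_le order_trans)
    have "norm ((Zof W t - Zof V t) - (Zof W 0 - Zof V 0)) \<le> Bn * d * \<bar>t - 0\<bar>"
      by (rule mvt_bound[of "-\<delta>" \<delta> _ "\<lambda>u. W u - V u"]) (use der bd that(4) \<delta>0 in \<open>auto simp: I_def\<close>)
    then have "norm (Zof W t - Zof V t) \<le> Bn * d * \<bar>t\<bar>" using Z0 by simp
    moreover have "d \<ge> 0" using that(3) I0 nb(4)[of "W 0 - V 0"] by fastforce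
    ultimately show ?thesis using that(4) Ib Bn(1) by (meson mult_left_mono order_trans mult_nonneg_nonneg less_imp_le)
  qed
  have Nin: "(t, Zof W t, Zof W (Zof W t $ i1), W t, W (Zof W t $ i1)) \<in> Neps nrm P \<epsilon>"
    if "S W" "t \<in> I" for W t
    using box Zc0[OF that] Znrm[OF that(1)] Sbnd(1)[OF that(1)] that(2) Ib by simp
  have inv: "S (T W)" if SW: "S W" for W
  proof -
    have "T W 0 = P" unfolding T_def using Z0 SW P_fix unfolding S_def by simp
    moreover have "\<bar>T W t $ i1\<bar> \<le> 1" if "t \<in> I" for t
      unfolding T_def by (rule h1_bound[OF Nin[OF SW that]])
    moreover have "nrm (T W s - T W t) \<le> K * \<bar>s - t\<bar>" if st: "s \<in> I" "t \<in> I" for s t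
    proof -
      define a_t where "a_t = Zof W t $ i1"
      define a_s where "a_s = Zof W s $ i1"
      have atI: "a_t \<in> I" "a_s \<in> I" unfolding a_t_def a_s_def using Zc0 SW st by auto
      have aa: "\<bar>a_s - a_t\<bar> \<le> \<bar>s - t\<bar>" unfolding a_t_def a_s_def using Zc[OF SW st] .
      let ?X1 = "(t, Zof W t, Zof W a_t, W t, W a_t)"
      let ?X2 = "(s, Zof W t, Zof W a_t, W t, W a_t)"
      let ?X3 = "(s, Zof W s, Zof W a_s, W t, W a_t)"
      let ?X4 = "(s, Zof W s, Zof W a_s, W s, W a_s)"
      have N: "?X1 \<in> Neps nrm P \<epsilon>" "?X2 \<in> Neps nrm P \<epsilon>" "?X3 \<in> Neps nrm P \<epsilon>" "?X4 \<in> Neps nrm P \<epsilon>"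
        using box Znrm[OF SW] Sbnd(1)[OF SW] atI st Ib by simp_all
      have e1: "nrm (H ?X2 - H ?X1) \<le> \<Lambda> * \<bar>s - t\<bar>" by (rule lip_t[OF N(1) N(2)])
      have "nrm (H ?X3 - H ?X2) \<le> L0 * nrm (Zof W s - Zof W t) + L1 * nrm (Zof W a_s - Zof W a_t)"
        by (rule lip_z[OF N(2) N(3)])
      also have "\<dots> \<le> L0 * (G * \<bar>s - t\<bar>) + L1 * (G * \<bar>a_s - a_t\<bar>)"
        using Zlip[OF SW st(1,2)] Zlip[OF SW atI(2,1)] L by (intro add_mono mult_left_mono) auto
      also have "\<dots> \<le> L0 * (G * \<bar>s - t\<bar>) + L1 * (G * \<bar>s - t\<bar>)"
        using aa L G by (intro add_mono mult_left_mono) auto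
      finally have e2: "nrm (H ?X3 - H ?X2) \<le> (L0 + L1) * G * \<bar>s - t\<bar>" by (simp add: algebra_simps)
      have "nrm (H ?X4 - H ?X3) \<le> C0 * nrm (W s - W t) + C1 * nrm (W a_s - W a_t)"
        by (rule lip_x[OF N(3) N(4)])
      also have "\<dots> \<le> C0 * (K * \<bar>s - t\<bar>) + C1 * (K * \<bar>a_s - a_t\<bar>)"
        using SW st atI C unfolding S_def by (intro add_mono mult_left_mono) auto
      also have "\<dots> \<le> C0 * (K * \<bar>s - t\<bar>) + C1 * (K * \<bar>s - t\<bar>)"
        using aa C K by (intro add_mono mult_left_mono) auto
      finally have e3: "nrm (H ?X4 - H ?X3) \<le> q0 * K * \<bar>s - t\<bar>" unfolding q0_def by (simp add: algebra_simps)
      have "nrm (H ?X4 - H ?X1) \<le> nrm (H ?X4 - H ?X3) + nrm (H ?X3 - H ?X2) + nrm (H ?X2 - H ?X1)"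
        using nb(7)[where x="H ?X4" and y="H ?X3" and z="H ?X1"] nb(7)[where x="H ?X3" and y="H ?X2" and z="H ?X1"] by linarith
      also have "\<dots> \<le> (q0 * K + (L0 + L1) * G + \<Lambda>) * \<bar>s - t\<bar>"
        using e1 e2 e3 by (simp add: algebra_simps)
      also have "\<dots> = K * \<bar>s - t\<bar>" using Keq by (simp add: algebra_simps)
      finally show ?thesis unfolding T_def a_t_def a_s_def .
    qed
    ultimately show ?thesis unfolding S_def by blast
  qed
  define q where "q = (1 + q0) / 2"
  have q: "0 \<le> q" "q < 1" unfolding q_def using q0 by auto
  have contr: "\<forall>t\<in>I. nrm (T W t - T V t) \<le> q * d"
    if SW: "S W" and SV: "S V" and dd: "\<forall>t\<in>I. nrm (W t - V t) \<le> d" for W V d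
  proof
    fix t assume t: "t \<in> I"
    have d0: "d \<ge> 0" using dd I0 nb(4)[of "W 0 - V 0"] by fastforce
    define aW where "aW = Zof W t $ i1"
    define aV where "aV = Zof V t $ i1"
    have aI: "aW \<in> I" "aV \<in> I" unfolding aW_def aV_def using Zc0 SW SV t by auto
    have zd: "norm (Zof W t - Zof V t) \<le> Bn * d * \<delta>" by (rule Zdiff[OF SW SV dd t])
    have zdn: "nrm (Zof V t - Zof W t) \<le> A * Bn * d * \<delta>" if "t \<in> I" for t
    proof -
      have "nrm (Zof V t - Zof W t) = nrm (Zof W t - Zof V t)" by (rule nb(2))
      also have "\<dots> \<le> A * norm (Zof W t - Zof V t)" by (rule A(2))
      also have "\<dots> \<le> A * (Bn * d * \<delta>)" using Zdiff[OF SW SV dd that] A by simp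
      finally show ?thesis by (simp add: mult.assoc)
    qed
    have aa: "\<bar>aV - aW\<bar> \<le> Bn * d * \<delta>"
    proof -
      have "\<bar>aV - aW\<bar> = \<bar>(Zof W t - Zof V t) $ i1\<bar>" unfolding aW_def aV_def by simp
      also have "\<dots> \<le> norm (Zof W t - Zof V t)" by (rule component_le_norm_cart)
      finally show ?thesis using zd by linarith
    qed
    let ?Y1 = "(t, Zof W t, Zof W aW, W t, W aW)"
    let ?Y2 = "(t, Zof V t, Zof V aV, W t, W aW)"
    let ?Y3 = "(t, Zof V t, Zof V aV, V t, V aV)"
    have N: "?Y1 \<in> Neps nrm P \<epsilon>" "?Y2 \<in> Neps nrm P \<epsilon>" "?Y3 \<in> Neps nrm P \<epsilon>"
      using box Znrm[OF SW] Znrm[OF SV] Sbnd(1)[OF SW] Sbnd(1)[OF SV] aI t Ib by simp_all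
    have zz: "nrm (Zof V aV - Zof W aW) \<le> G * (Bn * d * \<delta>) + A * Bn * d * \<delta>"
    proof -
      have "nrm (Zof V aV - Zof W aW) \<le> nrm (Zof V aV - Zof V aW) + nrm (Zof V aW - Zof W aW)"
        by (rule nb(7))
      also have "\<dots> \<le> G * \<bar>aV - aW\<bar> + A * Bn * d * \<delta>"
        using Zlip[OF SV aI(2,1)] zdn[OF aI(1)] by (rule add_mono)
      also have "\<dots> \<le> G * (Bn * d * \<delta>) + A * Bn * d * \<delta>"
        using aa G by (simp add: mult_left_mono)
      finally show ?thesis .
    qed
    have ww: "nrm (V aV - W aW) \<le> K * (Bn * d * \<delta>) + d"
    proof -
      have "nrm (V aV - W aW) \<le> nrm (V aV - V aW) + nrm (V aW - W aW)" by (rule nb(7))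
      also have "\<dots> \<le> K * \<bar>aV - aW\<bar> + d"
        using SV aI dd nb(2)[of "V aW" "W aW"] unfolding S_def by (intro add_mono) auto
      also have "\<dots> \<le> K * (Bn * d * \<delta>) + d" using aa K by (simp add: mult_left_mono)
      finally show ?thesis .
    qed
    have "nrm (H ?Y2 - H ?Y1) \<le> L0 * nrm (Zof V t - Zof W t) + L1 * nrm (Zof V aV - Zof W aW)"
      by (rule lip_z[OF N(1) N(2)])
    also have "\<dots> \<le> L0 * (A * Bn * d * \<delta>) + L1 * (G * (Bn * d * \<delta>) + A * Bn * d * \<delta>)"
      using zdn[OF t] zz L by (intro add_mono mult_left_mono) auto
    finally have e1: "nrm (H ?Y2 - H ?Y1) \<le> L0 * (A * Bn * d * \<delta>) + L1 * (G * (Bn * d * \<delta>) + A * Bn * d * \<delta>)" .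
    have "nrm (H ?Y3 - H ?Y2) \<le> C0 * nrm (V t - W t) + C1 * nrm (V aV - W aW)"
      by (rule lip_x[OF N(2) N(3)])
    also have "\<dots> \<le> C0 * d + C1 * (K * (Bn * d * \<delta>) + d)"
      using dd t nb(2)[of "V t" "W t"] ww C by (intro add_mono mult_left_mono) auto
    finally have e2: "nrm (H ?Y3 - H ?Y2) \<le> C0 * d + C1 * (K * (Bn * d * \<delta>) + d)" .
    have "nrm (H ?Y1 - H ?Y3) = nrm (H ?Y3 - H ?Y1)" by (rule nb(2))
    also have "\<dots> \<le> nrm (H ?Y3 - H ?Y2) + nrm (H ?Y2 - H ?Y1)" by (rule nb(7))
    also have "\<dots> \<le> d * (q0 + \<delta> * E)"
      using e1 e2 unfolding E_def q0_def by (simp add: algebra_simps)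
    also have "\<dots> \<le> d * q"
      using \<delta>E d0 unfolding q_def by (intro mult_left_mono) auto
    finally show "nrm (T W t - T V t) \<le> q * d" unfolding T_def aW_def aV_def by (simp add: mult.commute)
  qed
  have D0: "nrm (W t - V t) \<le> 2 * K * \<delta>" if "S W" "S V" "t \<in> I" for W V t
  proof -
    have "nrm (W t - V t) \<le> nrm (W t - P) + nrm (P - V t)" by (rule nb(7))
    then show ?thesis using Sbnd(1)[OF that(1,3)] Sbnd(1)[OF that(2,3)] nb(2)[of P "V t"] by linarith
  qed
  have closed: "S g" if fS: "\<And>k. S (f k)" and fg: "\<And>t. t \<in> I \<Longrightarrow> (\<lambda>k. f k t) \<longlonglongrightarrow> g t" for f g
  proof -
    have "(\<lambda>k. f k 0) \<longlonglongrightarrow> g 0" by (rule fg[OF I0])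
    moreover have "(\<lambda>k. f k 0) = (\<lambda>k. P)" using fS unfolding S_def by auto
    ultimately have g0: "g 0 = P" using LIMSEQ_unique tendsto_const by metis
    have gl: "nrm (g s - g t) \<le> K * \<bar>s - t\<bar>" if "s \<in> I" "t \<in> I" for s t
    proof (rule LIMSEQ_le_const2)
      show "(\<lambda>k. nrm (f k s - f k t)) \<longlonglongrightarrow> nrm (g s - g t)"
        by (intro nrm_tendsto[OF nrm] tendsto_diff fg that)
      show "\<exists>N. \<forall>n\<ge>N. nrm (f n s - f n t) \<le> K * \<bar>s - t\<bar>" using fS that unfolding S_def by blast
    qed
    have g1: "\<bar>g t $ i1\<bar> \<le> 1" if "t \<in> I" for t
    proof (rule LIMSEQ_le_const2)
      show "(\<lambda>k. \<bar>f k t $ i1\<bar>) \<longlonglongrightarrow> \<bar>g t $ i1\<bar>"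
        by (intro tendsto_rabs tendsto_vec_nth fg that)
      show "\<exists>N. \<forall>n\<ge>N. \<bar>f n t $ i1\<bar> \<le> 1" using fS that unfolding S_def by blast
    qed
    show ?thesis unfolding S_def using g0 gl g1 by blast
  qed
  have S0: "S (\<lambda>t. P)" unfolding S_def using P1 K nb(3) by simp
  have ex: "\<exists>W. S W \<and> (\<forall>t\<in>I. T W t = W t)"
  proof (rule abstract_fix[where S=S and T=T and I=I and nrm=nrm and q=q and D="2 * K * \<delta>"])
    show "is_norm nrm" by (rule nrm)
    show "S (\<lambda>t. P)" by (rule S0)
    show "0 \<le> q" "q < 1" by (rule q(1), rule q(2))
    show "\<And>W. S W \<Longrightarrow> S (T W)" by (rule inv)
    show "\<And>W V d. S W \<Longrightarrow> S V \<Longrightarrow> \<forall>t\<in>I. nrm (W t - V t) \<le> d \<Longrightarrow> \<forall>t\<in>I. nrm (T W t - T V t) \<le> q * d"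
      by (rule contr)
    show "\<And>W V t. S W \<Longrightarrow> S V \<Longrightarrow> t \<in> I \<Longrightarrow> nrm (W t - V t) \<le> 2 * K * \<delta>" by (rule D0)
    show "\<And>f g. (\<And>k. S (f k)) \<Longrightarrow> (\<And>t. t \<in> I \<Longrightarrow> (\<lambda>k. f k t) \<longlonglongrightarrow> g t) \<Longrightarrow> S g"
      by (rule closed)
  qed
  then obtain W where SW: "S W" and fixW: "\<forall>t\<in>I. T W t = W t" by blast
  have II: "I = {-\<delta>..\<delta>}" by (rule I_def)
  have 1: "\<forall>t\<in>{-\<delta>..\<delta>}. (Zof W has_vector_derivative W t) (at t within {-\<delta>..\<delta>})"
    using Zder[OF SW] unfolding II by blast
  have 2: "continuous_on {-\<delta>..\<delta>} W" using Scont[OF SW] unfolding II .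
  have 3: "\<forall>t\<in>{-\<delta>..\<delta>}. \<bar>Zof W t $ i1\<bar> \<le> \<bar>t\<bar> \<and>
              (t, Zof W t, Zof W (Zof W t $ i1), W t, W (Zof W t $ i1)) \<in> Neps nrm P \<epsilon> \<and>
              W t = H (t, Zof W t, Zof W (Zof W t $ i1), W t, W (Zof W t $ i1))"
  proof
    fix t assume "t \<in> {-\<delta>..\<delta>}"
    then have t: "t \<in> I" unfolding II .
    show "\<bar>Zof W t $ i1\<bar> \<le> \<bar>t\<bar> \<and>
              (t, Zof W t, Zof W (Zof W t $ i1), W t, W (Zof W t $ i1)) \<in> Neps nrm P \<epsilon> \<and>
              W t = H (t, Zof W t, Zof W (Zof W t $ i1), W t, W (Zof W t $ i1))"
      using Zc0(1)[OF SW t] Nin[OF SW t] fixW t unfolding T_def by auto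
  qed
  have 4: "Zof W 0 = 0" by (rule Z0)
  have 5: "W 0 = P" using SW unfolding S_def by simp
  show ?thesis using \<delta>0 1 2 3 4 5 by blast
qed
end
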